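(* There is a function $C_2(t,\epsilon)$ such that the following holds for every positive integer $t$ and every $\epsilon\in(0,1)$: let $G$ be a bipartite graph which is induced $S_{t,t}$-free. For every edge $ab$ of $G$ and all sets $A\subseteq N(a)$, $B\subseteq N(b)$ with $|B|\geq C_2(t,\epsilon)$, we have $|S_A^B(\epsilon)|\leq C_2(t,\epsilon)$.
   Context: For positive integers $a,b$, the biclaw $S_{a,b}$ is the graph with vertex set $\{x,x_1,\dots,x_a,y,y_1,\dots,y_b\}$ and edges $xy$, $xy_1,\dots,xy_b$, $yx_1,\dots,yx_a$. Induced $S_{t,t}$-free means no induced subgraph isomorphic to $S_{t,t}$. $N(v)$ denotes the neighbourhood of $v$. For vertex sets $X,Y$ and $\epsilon\in(0,1)$, $S_X^Y(\epsilon)=\{x\in X : |N(x)\cap Y|\leq (1-\epsilon)|Y|\}$. *)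

theory Defs
  imports Complex_Main
begin

definition simple_graph :: "'a set \<Rightarrow> ('a \<Rightarrow> 'a \<Rightarrow> bool) \<Rightarrow> bool" where
  "simple_graph V E \<longleftrightarrow> finite V \<and> (\<forall>u v. E u v \<longrightarrow> E v u)
     \<and> (\<forall>v. \<not> E v v) \<and> (\<forall>u v. E u v \<longrightarrow> u \<in> V \<and> v \<in> V)"

definition bipartite :: "'a set \<Rightarrow> ('a \<Rightarrow> 'a \<Rightarrow> bool) \<Rightarrow> bool" where
  "bipartite V E \<longleftrightarrow> (\<exists>X Y. X \<union> Y = V \<and> X \<inter> Y = {}
     \<and> (\<forall>u\<in>X. \<forall>v\<in>X. \<not> E u v) \<and> (\<forall>u\<in>Y. \<forall>v\<in>Y. \<not> E u v))"

definition nbhd :: "'a set \<Rightarrow> ('a \<Rightarrow> 'a \<Rightarrow> bool) \<Rightarrow> 'a \<Rightarrow> 'a set" where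
  "nbhd V E v = {u \<in> V. E v u}"

text \<open>G contains an induced copy of the biclaw S_{a,b}: distinct vertices
  x, x_1..x_a (xs 0..xs (a-1)), y, y_1..y_b (ys 0..ys (b-1)) whose only edges are
  xy, x y_j and y x_i.\<close>
definition has_induced_biclaw :: "'a set \<Rightarrow> ('a \<Rightarrow> 'a \<Rightarrow> bool) \<Rightarrow> nat \<Rightarrow> nat \<Rightarrow> bool" where
  "has_induced_biclaw V E a b \<longleftrightarrow> (\<exists>x y (xs::nat \<Rightarrow> 'a) (ys::nat \<Rightarrow> 'a).
     x \<in> V \<and> y \<in> V \<and> xs ` {..<a} \<subseteq> V \<and> ys ` {..<b} \<subseteq> V
     \<and> inj_on xs {..<a} \<and> inj_on ys {..<b}
     \<and> x \<noteq> y \<and> x \<notin> xs ` {..<a} \<and> x \<notin> ys ` {..<b}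
     \<and> y \<notin> xs ` {..<a} \<and> y \<notin> ys ` {..<b}
     \<and> xs ` {..<a} \<inter> ys ` {..<b} = {}
     \<and> E x y
     \<and> (\<forall>j<b. E x (ys j)) \<and> (\<forall>i<a. E y (xs i))
     \<and> (\<forall>i<a. \<not> E x (xs i)) \<and> (\<forall>j<b. \<not> E y (ys j))
     \<and> (\<forall>i<a. \<forall>i'<a. \<not> E (xs i) (xs i'))
     \<and> (\<forall>j<b. \<forall>j'<b. \<not> E (ys j) (ys j'))
     \<and> (\<forall>i<a. \<forall>j<b. \<not> E (xs i) (ys j)))"

definition induced_biclaw_free :: "'a set \<Rightarrow> ('a \<Rightarrow> 'a \<Rightarrow> bool) \<Rightarrow> nat \<Rightarrow> nat \<Rightarrow> bool" where
  "induced_biclaw_free V E a b \<longleftrightarrow> \<not> has_induced_biclaw V E a b"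

definition sparse_set :: "'a set \<Rightarrow> ('a \<Rightarrow> 'a \<Rightarrow> bool) \<Rightarrow> 'a set \<Rightarrow> 'a set \<Rightarrow> real \<Rightarrow> 'a set" where
  "sparse_set V E X Y eps =
     {x \<in> X. real (card (nbhd V E x \<inter> Y)) \<le> (1 - eps) * real (card Y)}"

end

theory Submission imports Defs begin

lemma avg:
  assumes "finite S" "finite B" "B \<noteq> {}" "\<forall>x\<in>S. d \<le> card {y\<in>B. R x y}"
  shows "\<exists>y\<in>B. d * card S \<le> card {x\<in>S. R x y} * card B"
proof (rule ccontr)
  assume H: "\<not> ?thesis"
  have "d * card S = (\<Sum>x\<in>S. d)" by simp
  also have "\<dots> \<le> (\<Sum>x\<in>S. card {y\<in>B. R x y})" using assms(4) by (intro sum_mono) auto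
  also have "\<dots> = (\<Sum>x\<in>S. \<Sum>y\<in>B. if R x y then 1 else 0)"
    using assms(2) by (simp add: sum.If_cases Int_def)
  also have "\<dots> = (\<Sum>y\<in>B. \<Sum>x\<in>S. if R x y then 1 else 0)" by (rule sum.swap)
  also have "\<dots> = (\<Sum>y\<in>B. card {x\<in>S. R x y})"
    using assms(1) by (simp add: sum.If_cases Int_def)
  finally have 1: "d * card S \<le> (\<Sum>y\<in>B. card {x\<in>S. R x y})" .
  have "(\<Sum>y\<in>B. card {x\<in>S. R x y}) * card B < (\<Sum>y\<in>B. d * card S)"
    unfolding sum_distrib_right
    using H assms(2,3) by (intro sum_strict_mono) auto
  also have "\<dots> = card B * (d * card S)" by simp
  finally have "(\<Sum>y\<in>B. card {x\<in>S. R x y}) < d * card S" by simp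
  with 1 show False by simp
qed

lemma iter:
  assumes "finite S" "finite B" "\<forall>x\<in>S. d \<le> card {y\<in>B. R x y}" "d \<le> card B"
  shows "k \<le> d \<Longrightarrow> \<exists>T S'. T \<subseteq> B \<and> card T = k \<and> S' \<subseteq> S \<and> (\<forall>x\<in>S'. \<forall>y\<in>T. R x y)
          \<and> card S * (d - k) ^ k \<le> card S' * card B ^ k"
proof (induction k)
  case 0
  show ?case by (rule exI[of _ "{}"], rule exI[of _ S]) simp
next
  case (Suc k)
  then obtain T S' where T: "T \<subseteq> B" "card T = k" "S' \<subseteq> S" "\<forall>x\<in>S'. \<forall>y\<in>T. R x y"
     "card S * (d - k) ^ k \<le> card S' * card B ^ k" by auto
  have fT: "finite T" using T(1) assms(2) finite_subset by blast
  have deg: "\<forall>x\<in>S'. d - k \<le> card {y\<in>B - T. R x y}"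
  proof
    fix x assume "x \<in> S'"
    have "{y\<in>B. R x y} \<subseteq> {y\<in>B - T. R x y} \<union> T" by auto
    hence "card {y\<in>B. R x y} \<le> card {y\<in>B - T. R x y} + card T"
    proof -
      have "card {y\<in>B. R x y} \<le> card ({y\<in>B - T. R x y} \<union> T)"
        using \<open>{y\<in>B. R x y} \<subseteq> _\<close> assms(2) fT by (intro card_mono) auto
      also have "\<dots> \<le> card {y\<in>B - T. R x y} + card T" by (rule card_Un_le)
      finally show ?thesis .
    qed
    moreover have "d \<le> card {y\<in>B. R x y}" using assms(3) T(3) \<open>x \<in> S'\<close> by auto
    ultimately show "d - k \<le> card {y\<in>B - T. R x y}" using T(2) by linarith
  qed
  have cBT: "card (B - T) = card B - k" using T fT by (simp add: card_Diff_subset)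
  hence ne: "B - T \<noteq> {}" using Suc.prems assms(4) by (metis card.empty diff_is_0_eq not_less_eq_eq le_trans diff_le_mono)
  obtain y where y: "y \<in> B - T" "(d - k) * card S' \<le> card {x\<in>S'. R x y} * card (B - T)"
    using avg[OF finite_subset[OF T(3) assms(1)] _ ne deg] assms(2) by auto
  define S'' where "S'' = {x\<in>S'. R x y}"
  have "card S * (d - Suc k) ^ Suc k \<le> card S * (d - k) ^ Suc k"
    by (intro mult_le_mono2 power_mono) auto
  also have "\<dots> = (card S * (d - k) ^ k) * (d - k)" by simp
  also have "\<dots> \<le> (card S' * card B ^ k) * (d - k)" using T(5) by simp
  also have "\<dots> = ((d - k) * card S') * card B ^ k" by simp
  also have "\<dots> \<le> (card S'' * card (B - T)) * card B ^ k" using y(2) S''_def by simp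
  also have "\<dots> \<le> (card S'' * card B) * card B ^ k" using cBT by simp
  also have "\<dots> = card S'' * card B ^ Suc k" by simp
  finally have ineq: "card S * (d - Suc k) ^ Suc k \<le> card S'' * card B ^ Suc k" .
  show ?case
    apply (rule exI[of _ "insert y T"], rule exI[of _ S''])
    using T y ineq fT unfolding S''_def by auto
qed


lemma no_triangle:
  assumes "simple_graph V E" "bipartite V E" "E u v" "E v w" "E u w"
  shows False
proof -
  obtain X Y where XY: "X \<union> Y = V" "X \<inter> Y = {}" "\<forall>u\<in>X. \<forall>v\<in>X. \<not> E u v" "\<forall>u\<in>Y. \<forall>v\<in>Y. \<not> E u v"
    using assms(2) unfolding bipartite_def by blast
  have "u \<in> V" "v \<in> V" "w \<in> V" using assms(1,3,4) unfolding simple_graph_def by blast+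
  thus False using XY assms(3,4,5) by blast
qed

theorem mainTheorem4:
  shows "\<exists>C2 :: nat \<Rightarrow> real \<Rightarrow> nat. \<forall>t::nat. \<forall>eps::real. 0 < t \<and> 0 < eps \<and> eps < 1 \<longrightarrow>
    (\<forall>(V::nat set) (E::nat \<Rightarrow> nat \<Rightarrow> bool).
       simple_graph V E \<and> bipartite V E \<and> induced_biclaw_free V E t t \<longrightarrow>
       (\<forall>a b A B. E a b \<and> A \<subseteq> nbhd V E a \<and> B \<subseteq> nbhd V E b \<and> card B \<ge> C2 t eps \<longrightarrow>
          card (sparse_set V E A B eps) \<le> C2 t eps))"
proof (rule exI[of _ "\<lambda>t eps. nat \<lceil>(t+1) * (4/eps)^t\<rceil>"], intro allI impI, elim conjE)
  fix t :: nat and eps :: real and V :: "nat set" and E a b A B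
  assume t: "0 < t" and e0: "0 < eps" and e1: "eps < 1"
    and G: "simple_graph V E" and bip: "bipartite V E" and free: "induced_biclaw_free V E t t"
    and ab: "E a b" and A: "A \<subseteq> nbhd V E a" and B: "B \<subseteq> nbhd V E b"
  define C where "C = nat \<lceil>(t+1) * (4/eps)^t\<rceil>"
  assume nC: "nat \<lceil>(t+1) * (4/eps)^t\<rceil> \<le> card B"
  show "card (sparse_set V E A B eps) \<le> nat \<lceil>(t+1) * (4/eps)^t\<rceil>"
  proof (rule ccontr)
    define S where "S = sparse_set V E A B eps"
    define n where "n = card B"
    assume "\<not> ?thesis"
    hence SC: "C < card S" unfolding S_def C_def by simp
    have sym: "\<And>u v. E u v \<Longrightarrow> E v u" and irr: "\<And>v. \<not> E v v"
      and inV: "\<And>u v. E u v \<Longrightarrow> u \<in> V \<and> v \<in> V" and finV: "finite V"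
      using G unfolding simple_graph_def by blast+
    have tri: "\<And>u v w. E u v \<Longrightarrow> E v w \<Longrightarrow> E u w \<Longrightarrow> False"
      using no_triangle[OF G bip] by blast
    have BV: "B \<subseteq> V" and AV: "A \<subseteq> V" using A B unfolding nbhd_def by auto
    have finB: "finite B" and finA: "finite A" using BV AV finV finite_subset by blast+
    have Eb: "\<And>v. v \<in> B \<Longrightarrow> E b v" and Ea: "\<And>v. v \<in> A \<Longrightarrow> E a v"
      using A B unfolding nbhd_def by auto
    have SA: "S \<subseteq> A" unfolding S_def sparse_set_def by auto
    have finS: "finite S" using SA finA finite_subset by blast
    have Cge: "real C \<ge> (t+1) * (4/eps)^t" unfolding C_def by linarith
    have p1: "(4/eps)^t \<ge> 4/eps"
      using power_increasing[of 1 t "4/eps"] t e0 e1 by (simp add: field_simps)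
    have nge: "real n \<ge> real C" using nC unfolding n_def C_def by simp
    have en: "eps * n \<ge> 4 * (t+1)"
    proof -
      have "(t+1) * (4/eps) \<le> (t+1) * (4/eps)^t"
        using p1 by (intro mult_left_mono) auto
      hence "real n \<ge> (t+1) * (4/eps)" using nge Cge by linarith
      hence "eps * n \<ge> eps * ((t+1) * (4/eps))"
        using e0 by (intro mult_left_mono) auto
      moreover have "eps * ((t+1) * (4/eps)) = 4 * (t+1)" using e0 by (simp add: field_simps)
      ultimately show ?thesis by linarith
    qed
    define d where "d = nat \<lfloor>eps * n\<rfloor> - 1"
    have "eps * n \<ge> 1" using en by simp
    hence fl: "\<lfloor>eps * n\<rfloor> \<ge> 1" by (simp add: one_le_floor)
    have rd: "real d = real_of_int \<lfloor>eps * n\<rfloor> - 1"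
    proof -
      have "nat \<lfloor>eps * n\<rfloor> \<ge> 1" using fl by linarith
      hence "real d = real (nat \<lfloor>eps * n\<rfloor>) - 1" unfolding d_def by (simp add: of_nat_diff)
      moreover have "real (nat \<lfloor>eps * n\<rfloor>) = real_of_int \<lfloor>eps * n\<rfloor>" using fl by simp
      ultimately show ?thesis by simp
    qed
    have dle: "real d \<le> eps * n - 1" using rd by linarith
    have dge: "real d \<ge> eps * n - 2" using rd by linarith
    define B0 where "B0 = B - {a}"
    have finB0: "finite B0" unfolding B0_def using finB by simp
    have cB0: "card B0 \<le> n" "real n - 1 \<le> real (card B0)"
      unfolding B0_def n_def using finB
      by (auto simp: card_Diff_singleton_if)
    have deg: "\<forall>x\<in>S. d \<le> card {y\<in>B0. \<not> E x y}"
    proof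
      fix x assume xS: "x \<in> S"
      have sp: "real (card (nbhd V E x \<inter> B)) \<le> (1 - eps) * n"
        using xS unfolding S_def sparse_set_def n_def by auto
      have eq: "nbhd V E x \<inter> B = {y\<in>B. E x y}" using BV unfolding nbhd_def by auto
      have "card {y\<in>B. E x y} + card {y\<in>B. \<not> E x y} = n"
      proof -
        have "card ({y\<in>B. E x y} \<union> {y\<in>B. \<not> E x y}) = card {y\<in>B. E x y} + card {y\<in>B. \<not> E x y}"
          using finB by (intro card_Un_disjoint) auto
        moreover have "{y\<in>B. E x y} \<union> {y\<in>B. \<not> E x y} = B" by auto
        ultimately show ?thesis unfolding n_def by simp
      qed
      have "{y\<in>B. \<not> E x y} \<subseteq> insert a {y\<in>B0. \<not> E x y}" unfolding B0_def by auto
      hence "card {y\<in>B. \<not> E x y} \<le> card (insert a {y\<in>B0. \<not> E x y})"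
        using finB0 by (intro card_mono) auto
      also have "\<dots> \<le> card {y\<in>B0. \<not> E x y} + 1" using finB0 by (simp add: card_insert_if)
      finally have c1: "real (card {y\<in>B. \<not> E x y}) \<le> real (card {y\<in>B0. \<not> E x y}) + 1"
        by linarith
      have c2: "real (card {y\<in>B. E x y}) + real (card {y\<in>B. \<not> E x y}) = real n"
        using \<open>card {y\<in>B. E x y} + card {y\<in>B. \<not> E x y} = n\<close> by (metis of_nat_add)
      have c3: "(1 - eps) * real n = real n - eps * real n" by (simp add: algebra_simps)
      have "real d \<le> real (card {y\<in>B0. \<not> E x y})"
      proof -
        have sp': "real (card {y\<in>B. E x y}) \<le> (1 - eps) * real n" using sp eq by simp
        show ?thesis using c1 c2 c3 sp' dle by linarith
      qed
      thus "d \<le> card {y\<in>B0. \<not> E x y}" by simp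
    qed
    have "eps * n \<le> 1 * real n" using e1 by (intro mult_right_mono) auto
    hence "real d \<le> real (card B0)" using dle cB0 by linarith
    hence dB0: "d \<le> card B0" by simp
    have en': "4 * real t + 4 \<le> eps * n" using en by simp
    have "real t \<le> real d" using dge en' by linarith
    hence td: "t \<le> d" by simp
    obtain T S' where T: "T \<subseteq> B0" "card T = t" "S' \<subseteq> S" "\<forall>x\<in>S'. \<forall>y\<in>T. \<not> E x y"
      "card S * (d - t) ^ t \<le> card S' * card B0 ^ t"
      using iter[OF finS finB0 deg dB0 td] by blast
    have dt: "real (d - t) \<ge> eps * n / 2" using dge en' td by (simp add: of_nat_diff)
    have npos: "real n > 0" using en by (cases "n = 0") auto
    have "real (card S) * (eps * n / 2) ^ t \<le> real (card S) * real (d - t) ^ t"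
      using dt e0 by (intro mult_left_mono power_mono) auto
    also have "\<dots> \<le> real (card S') * real (card B0) ^ t"
      using T(5) by (metis of_nat_le_iff of_nat_mult of_nat_power)
    also have "\<dots> \<le> real (card S') * real n ^ t"
      using cB0 by (intro mult_left_mono power_mono) auto
    finally have fin1: "real (card S) * (eps * n / 2) ^ t \<le> real (card S') * real n ^ t" .
    have "eps * n / 2 = (eps / 2) * real n" by simp
    hence eqp: "(eps * n / 2) ^ t = (eps / 2) ^ t * real n ^ t" by (simp only: power_mult_distrib)
    have "real (card S) * (eps / 2) ^ t * real n ^ t = real (card S) * (eps * n / 2) ^ t"
      using eqp by (simp only: mult.assoc)
    hence k0: "real (card S) * (eps / 2) ^ t * real n ^ t \<le> real (card S') * real n ^ t"
      using fin1 by linarith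
    have npt: "real n ^ t > 0" using npos by simp
    have k1: "real (card S) * (eps / 2) ^ t \<le> real (card S')"
      using k0 mult_le_cancel_right_pos[OF npt] by blast
    have "4/eps*(eps/2) = 2" using e0 by simp
    hence p2: "(4/eps)^t * (eps/2)^t = 2^t" by (metis power_mult_distrib)
    have "real (t+1) \<le> real (t+1) * 2 ^ t" by simp
    also have "\<dots> = (real (t+1) * (4/eps)^t) * (eps/2)^t"
      using p2 by (simp only: mult.assoc)
    also have "\<dots> \<le> real (card S) * (eps/2)^t"
      using Cge SC e0 by (intro mult_right_mono) auto
    finally have "real (t+1) \<le> real (card S')" using k1 by linarith
    hence cS': "t + 1 \<le> card S'" by linarith
    have finS': "finite S'" using T(3) finS finite_subset by blast
    have "t \<le> card (S' - {b})" using cS' finS' by (cases "b \<in> S'") (auto simp: card_Diff_singleton_if)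
    then obtain U where U: "U \<subseteq> S' - {b}" "card U = t" using obtain_subset_with_card_n by metis
    have finU: "finite U" "finite T" using U(1) T(1) finS' finB0 finite_subset by blast+
    obtain ys where ys: "bij_betw ys {..<t} U"
      using ex_bij_betw_nat_finite[OF finU(1)] U(2) by (metis lessThan_atLeast0)
    obtain xs where xs: "bij_betw xs {..<t} T"
      using ex_bij_betw_nat_finite[OF finU(2)] T(2) by (metis lessThan_atLeast0)
    have ysU: "ys ` {..<t} = U" and xsT: "xs ` {..<t} = T"
      using ys xs by (auto simp: bij_betw_def)
    have UA: "U \<subseteq> A" and TB: "T \<subseteq> B" using U T SA B0_def by auto
    have "has_induced_biclaw V E t t"
      unfolding has_induced_biclaw_def
    proof (intro exI conjI)
      show "a \<in> V" "b \<in> V" using inV[OF ab] by auto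
      show "xs ` {..<t} \<subseteq> V" "ys ` {..<t} \<subseteq> V" using xsT ysU UA TB AV BV by auto
      show "inj_on xs {..<t}" "inj_on ys {..<t}" using xs ys by (auto simp: bij_betw_def)
      show "a \<noteq> b" using ab irr by auto
      show "a \<notin> xs ` {..<t}" using xsT T(1) B0_def by auto
      show "a \<notin> ys ` {..<t}" using ysU UA Ea irr by auto
      show "b \<notin> xs ` {..<t}" using xsT TB Eb irr by auto
      show "b \<notin> ys ` {..<t}" using ysU U(1) by auto
      show "xs ` {..<t} \<inter> ys ` {..<t} = {}"
      proof (rule ccontr)
        assume "xs ` {..<t} \<inter> ys ` {..<t} \<noteq> {}"
        then obtain v where "v \<in> T" "v \<in> U" using xsT ysU by blast
        hence "E b v" "E a v" using TB UA Ea Eb by auto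
        thus False using tri[OF ab] by blast
      qed
      show "E a b" by (rule ab)
      show "\<forall>j<t. E a (ys j)" using ysU UA Ea by auto
      show "\<forall>i<t. E b (xs i)" using xsT TB Eb by auto
      show "\<forall>i<t. \<not> E a (xs i)"
      proof (intro allI impI notI)
        fix i assume "i < t" "E a (xs i)"
        moreover have "E b (xs i)" using \<open>i < t\<close> xsT TB Eb by auto
        ultimately show False using tri[OF ab] by blast
      qed
      show "\<forall>j<t. \<not> E b (ys j)"
      proof (intro allI impI notI)
        fix j assume "j < t" "E b (ys j)"
        moreover have "E a (ys j)" using \<open>j < t\<close> ysU UA Ea by auto
        ultimately show False using tri[OF ab] by blast
      qed
      show "\<forall>i<t. \<forall>i'<t. \<not> E (xs i) (xs i')"
      proof (intro allI impI notI)
        fix i i' assume "i < t" "i' < t" "E (xs i) (xs i')"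
        moreover have "E b (xs i)" "E b (xs i')" using \<open>i < t\<close> \<open>i' < t\<close> xsT TB Eb by auto
        ultimately show False using tri by blast
      qed
      show "\<forall>j<t. \<forall>j'<t. \<not> E (ys j) (ys j')"
      proof (intro allI impI notI)
        fix j j' assume "j < t" "j' < t" "E (ys j) (ys j')"
        moreover have "E a (ys j)" "E a (ys j')" using \<open>j < t\<close> \<open>j' < t\<close> ysU UA Ea by auto
        ultimately show False using tri by blast
      qed
      show "\<forall>i<t. \<forall>j<t. \<not> E (xs i) (ys j)"
      proof (intro allI impI notI)
        fix i j assume "i < t" "j < t" "E (xs i) (ys j)"
        moreover have "xs i \<in> T" "ys j \<in> S'" using \<open>i < t\<close> \<open>j < t\<close> xsT ysU U(1) by auto
        ultimately show False using T(4) sym by blast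
      qed
    qed
    thus False using free unfolding induced_biclaw_free_def by simp
  qed
qed

end
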